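(* In any category, consider morphisms $f_1,f_2:A_{11}\to A_{12}$, $f'_1,f'_2:A_{11}\to A_{21}$, $g'_1,g'_2:A_{12}\to A_{22}$ and $g_1,g_2:A_{21}\to A_{22}$ such that $g_i\circ f'_j=g'_j\circ f_i$ for all $i,j\in\{1,2\}$, and suppose there exist $s:A_{12}\to A_{11}$ and $s':A_{21}\to A_{11}$ with $f_1 s=f_2 s=1_{A_{12}}$ and $f'_1 s'=f'_2 s'=1_{A_{21}}$. Then a morphism $x:A_{22}\to B$ satisfies $x g'_1 f_1=x g'_2 f_2$ if and only if $x g_1=x g_2$ and $x g'_1=x g'_2$. Consequently, the coequalizer of $g'_1\circ f_1$ and $g'_2\circ f_2$ is the cointersection of the coequalizer of $g_1,g_2$ and the coequalizer of $g'_1,g'_2$.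
   Context: The cointersection of two quotient maps $c:A_{22}\to C$ and $c':A_{22}\to C'$ is their pushout, i.e. the universal morphism $A_{22}\to D$ through which both factor. *)

theory Defs
  imports Main
begin

text \<open>A (small or large) category presented by its set of arrows, domain and codomain
maps, a composition operation (Comp C g f = g after f, meaningful when Cod f = Dom g)
and identities. Objects are all elements of the type 'o.\<close>

record ('o, 'a) cat =
  Arr  :: "'a set"
  Dom  :: "'a \<Rightarrow> 'o"
  Cod  :: "'a \<Rightarrow> 'o"
  Comp :: "'a \<Rightarrow> 'a \<Rightarrow> 'a"
  Ide  :: "'o \<Rightarrow> 'a"

definition Hom :: "('o, 'a) cat \<Rightarrow> 'o \<Rightarrow> 'o \<Rightarrow> 'a set" where
  "Hom C X Y = {f. f \<in> Arr C \<and> Dom C f = X \<and> Cod C f = Y}"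

definition category :: "('o, 'a) cat \<Rightarrow> bool" where
  "category C \<longleftrightarrow>
     (\<forall>X. Ide C X \<in> Hom C X X) \<and>
     (\<forall>X Y Z f g. f \<in> Hom C X Y \<longrightarrow> g \<in> Hom C Y Z \<longrightarrow> Comp C g f \<in> Hom C X Z) \<and>
     (\<forall>W X Y Z f g h. f \<in> Hom C W X \<longrightarrow> g \<in> Hom C X Y \<longrightarrow> h \<in> Hom C Y Z \<longrightarrow>
        Comp C h (Comp C g f) = Comp C (Comp C h g) f) \<and>
     (\<forall>X Y f. f \<in> Hom C X Y \<longrightarrow> Comp C f (Ide C X) = f \<and> Comp C (Ide C Y) f = f)"

definition is_coequalizer :: "('o, 'a) cat \<Rightarrow> 'a \<Rightarrow> 'a \<Rightarrow> 'a \<Rightarrow> bool" where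
  "is_coequalizer C f g q \<longleftrightarrow>
     f \<in> Arr C \<and> g \<in> Arr C \<and> Dom C f = Dom C g \<and> Cod C f = Cod C g \<and>
     q \<in> Arr C \<and> Dom C q = Cod C f \<and> Comp C q f = Comp C q g \<and>
     (\<forall>x. x \<in> Arr C \<and> Dom C x = Cod C f \<and> Comp C x f = Comp C x g \<longrightarrow>
        (\<exists>!u. u \<in> Hom C (Cod C q) (Cod C x) \<and> Comp C u q = x))"

definition is_cointersection :: "('o, 'a) cat \<Rightarrow> 'a \<Rightarrow> 'a \<Rightarrow> 'a \<Rightarrow> bool" where
  "is_cointersection C c c' q \<longleftrightarrow>
     c \<in> Arr C \<and> c' \<in> Arr C \<and> q \<in> Arr C \<and> Dom C c = Dom C q \<and> Dom C c' = Dom C q \<and>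
     (\<exists>u. u \<in> Hom C (Cod C c) (Cod C q) \<and> Comp C u c = q) \<and>
     (\<exists>u'. u' \<in> Hom C (Cod C c') (Cod C q) \<and> Comp C u' c' = q) \<and>
     (\<forall>y. y \<in> Arr C \<and> Dom C y = Dom C q \<and>
          (\<exists>v. v \<in> Hom C (Cod C c) (Cod C y) \<and> Comp C v c = y) \<and>
          (\<exists>v'. v' \<in> Hom C (Cod C c') (Cod C y) \<and> Comp C v' c' = y) \<longrightarrow>
        (\<exists>!w. w \<in> Hom C (Cod C q) (Cod C y) \<and> Comp C w q = y))"

end

theory Submission
  imports Defs
begin


lemma cat_comp: "category C \<Longrightarrow> f \<in> Hom C X Y \<Longrightarrow> g \<in> Hom C Y Z \<Longrightarrow> Comp C g f \<in> Hom C X Z"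
  unfolding category_def by blast
lemma cat_assoc: "category C \<Longrightarrow> f \<in> Hom C W X \<Longrightarrow> g \<in> Hom C X Y \<Longrightarrow> h \<in> Hom C Y Z \<Longrightarrow>
   Comp C h (Comp C g f) = Comp C (Comp C h g) f"
  unfolding category_def by blast
lemma cat_idr: "category C \<Longrightarrow> f \<in> Hom C X Y \<Longrightarrow> Comp C f (Ide C X) = f"
  unfolding category_def by blast
lemma HomD: "f \<in> Hom C X Y \<Longrightarrow> f \<in> Arr C \<and> Dom C f = X \<and> Cod C f = Y"
  unfolding Hom_def by simp

theorem proposition1:
  fixes C :: "('o, 'a) cat"
    and A11 A12 A21 A22 :: 'o
    and f1 f2 f'1 f'2 g1 g2 g'1 g'2 s s' :: 'a
  assumes cat: "category C"
    and f: "f1 \<in> Hom C A11 A12" "f2 \<in> Hom C A11 A12"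
    and f': "f'1 \<in> Hom C A11 A21" "f'2 \<in> Hom C A11 A21"
    and g': "g'1 \<in> Hom C A12 A22" "g'2 \<in> Hom C A12 A22"
    and g: "g1 \<in> Hom C A21 A22" "g2 \<in> Hom C A21 A22"
    and comm: "Comp C g1 f'1 = Comp C g'1 f1" "Comp C g1 f'2 = Comp C g'2 f1"
              "Comp C g2 f'1 = Comp C g'1 f2" "Comp C g2 f'2 = Comp C g'2 f2"
    and s: "s \<in> Hom C A12 A11" "Comp C f1 s = Ide C A12" "Comp C f2 s = Ide C A12"
    and s': "s' \<in> Hom C A21 A11" "Comp C f'1 s' = Ide C A21" "Comp C f'2 s' = Ide C A21"
  shows "(\<forall>B x. x \<in> Hom C A22 B \<longrightarrow>
            (Comp C x (Comp C g'1 f1) = Comp C x (Comp C g'2 f2) \<longleftrightarrow>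
             Comp C x g1 = Comp C x g2 \<and> Comp C x g'1 = Comp C x g'2))
       \<and> (\<forall>q c c'. is_coequalizer C (Comp C g'1 f1) (Comp C g'2 f2) q \<and>
                   is_coequalizer C g1 g2 c \<and> is_coequalizer C g'1 g'2 c' \<longrightarrow>
                   is_cointersection C c c' q)"
  proof -
  have P1: "Comp C x (Comp C g'1 f1) = Comp C x (Comp C g'2 f2) \<longleftrightarrow>
             Comp C x g1 = Comp C x g2 \<and> Comp C x g'1 = Comp C x g'2"
    if x: "x \<in> Hom C A22 B" for x B
  proof
    assume H: "Comp C x (Comp C g'1 f1) = Comp C x (Comp C g'2 f2)"
    have "Comp C x g'1 = Comp C (Comp C x g'1) (Comp C f1 s)"
      using s cat_idr[OF cat cat_comp[OF cat g'(1) x]] by simp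
    also have "\<dots> = Comp C (Comp C x (Comp C g'1 f1)) s"
      using cat_assoc[OF cat s(1) f(1) cat_comp[OF cat g'(1) x]] cat_assoc[OF cat f(1) g'(1) x] by simp
    also have "\<dots> = Comp C (Comp C x (Comp C g'2 f2)) s" using H by simp
    also have "\<dots> = Comp C (Comp C x g'2) (Comp C f2 s)"
      using cat_assoc[OF cat s(1) f(2) cat_comp[OF cat g'(2) x]] cat_assoc[OF cat f(2) g'(2) x] by simp
    also have "\<dots> = Comp C x g'2"
      using s cat_idr[OF cat cat_comp[OF cat g'(2) x]] by simp
    finally have E1: "Comp C x g'1 = Comp C x g'2" .
    have "Comp C x g1 = Comp C (Comp C x g1) (Comp C f'1 s')"
      using s' cat_idr[OF cat cat_comp[OF cat g(1) x]] by simp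
    also have "\<dots> = Comp C (Comp C x (Comp C g1 f'1)) s'"
      using cat_assoc[OF cat s'(1) f'(1) cat_comp[OF cat g(1) x]] cat_assoc[OF cat f'(1) g(1) x] by simp
    also have "\<dots> = Comp C (Comp C x (Comp C g2 f'2)) s'" using H comm by simp
    also have "\<dots> = Comp C (Comp C x g2) (Comp C f'2 s')"
      using cat_assoc[OF cat s'(1) f'(2) cat_comp[OF cat g(2) x]] cat_assoc[OF cat f'(2) g(2) x] by simp
    also have "\<dots> = Comp C x g2"
      using s' cat_idr[OF cat cat_comp[OF cat g(2) x]] by simp
    finally show "Comp C x g1 = Comp C x g2 \<and> Comp C x g'1 = Comp C x g'2" using E1 by simp
  next
    assume H: "Comp C x g1 = Comp C x g2 \<and> Comp C x g'1 = Comp C x g'2"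
    have "Comp C x (Comp C g'1 f1) = Comp C (Comp C x g'1) f1"
      using cat_assoc[OF cat f(1) g'(1) x] .
    also have "\<dots> = Comp C (Comp C x g'2) f1" using H by simp
    also have "\<dots> = Comp C x (Comp C g1 f'2)"
      using cat_assoc[OF cat f(1) g'(2) x] comm by simp
    also have "\<dots> = Comp C (Comp C x g1) f'2" using cat_assoc[OF cat f'(2) g(1) x] .
    also have "\<dots> = Comp C (Comp C x g2) f'2" using H by simp
    also have "\<dots> = Comp C x (Comp C g'2 f2)"
      using cat_assoc[OF cat f'(2) g(2) x] comm by simp
    finally show "Comp C x (Comp C g'1 f1) = Comp C x (Comp C g'2 f2)" .
  qed
  have hA: "Cod C (Comp C g'1 f1) = A22" "Dom C (Comp C g'1 f1) = A11"
    using HomD[OF cat_comp[OF cat f(1) g'(1)]] by auto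
  have P2: "is_cointersection C c c' q"
    if Q: "is_coequalizer C (Comp C g'1 f1) (Comp C g'2 f2) q"
      and Cc: "is_coequalizer C g1 g2 c" and Cc': "is_coequalizer C g'1 g'2 c'" for q c c'
  proof -
    have gc: "Cod C g1 = A22" "Cod C g'1 = A22" using g g' by (auto simp: Hom_def)
    have qH: "q \<in> Hom C A22 (Cod C q)" using Q hA unfolding is_coequalizer_def Hom_def by auto
    have cH: "c \<in> Hom C A22 (Cod C c)" using Cc gc unfolding is_coequalizer_def Hom_def by auto
    have c'H: "c' \<in> Hom C A22 (Cod C c')" using Cc' gc unfolding is_coequalizer_def Hom_def by auto
    have qeq: "Comp C q (Comp C g'1 f1) = Comp C q (Comp C g'2 f2)" using Q unfolding is_coequalizer_def by auto
    then have qe: "Comp C q g1 = Comp C q g2" "Comp C q g'1 = Comp C q g'2" using P1[OF qH] by auto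
    have u: "\<exists>u. u \<in> Hom C (Cod C c) (Cod C q) \<and> Comp C u c = q"
    proof -
      have "\<exists>!u. u \<in> Hom C (Cod C c) (Cod C q) \<and> Comp C u c = q"
        using Cc qH qe gc unfolding is_coequalizer_def by (auto simp: Hom_def)
      thus ?thesis by auto
    qed
    have u': "\<exists>u. u \<in> Hom C (Cod C c') (Cod C q) \<and> Comp C u c' = q"
    proof -
      have "\<exists>!u. u \<in> Hom C (Cod C c') (Cod C q) \<and> Comp C u c' = q"
        using Cc' qH qe gc unfolding is_coequalizer_def by (auto simp: Hom_def)
      thus ?thesis by auto
    qed
    have univ: "\<exists>!w. w \<in> Hom C (Cod C q) (Cod C y) \<and> Comp C w q = y"
      if y: "y \<in> Arr C" "Dom C y = Dom C q"
        and v: "\<exists>v. v \<in> Hom C (Cod C c) (Cod C y) \<and> Comp C v c = y"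
        and v': "\<exists>v'. v' \<in> Hom C (Cod C c') (Cod C y) \<and> Comp C v' c' = y" for y
    proof -
      have yH: "y \<in> Hom C A22 (Cod C y)" using y qH unfolding Hom_def by auto
      obtain v where v: "v \<in> Hom C (Cod C c) (Cod C y)" "Comp C v c = y" using v by blast
      obtain v' where v': "v' \<in> Hom C (Cod C c') (Cod C y)" "Comp C v' c' = y" using v' by blast
      have ce: "Comp C c g1 = Comp C c g2" using Cc unfolding is_coequalizer_def by auto
      have c'e: "Comp C c' g'1 = Comp C c' g'2" using Cc' unfolding is_coequalizer_def by auto
      have "Comp C y g1 = Comp C y g2"
        using cat_assoc[OF cat g(1) cH v(1)] cat_assoc[OF cat g(2) cH v(1)] ce v(2) by simp
      moreover have "Comp C y g'1 = Comp C y g'2"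
        using cat_assoc[OF cat g'(1) c'H v'(1)] cat_assoc[OF cat g'(2) c'H v'(1)] c'e v'(2) by simp
      ultimately have "Comp C y (Comp C g'1 f1) = Comp C y (Comp C g'2 f2)" using P1[OF yH] by simp
      then show ?thesis using Q y hA qH unfolding is_coequalizer_def Hom_def by auto
    qed
    show ?thesis unfolding is_cointersection_def
      using u u' univ qH cH c'H by (auto simp: Hom_def)
  qed
  show ?thesis using P1 P2 by blast
qed

end
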